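(* Fix $n$. If $K_{s_1}^{t_1}$ and $K_{s_2}^{t_2}$ are graphs with $2\le t_i\le s_i$ and $s_1+t_1=s_2+t_2=n$ that are $D$-cospectral, then they are isomorphic. That is, no two non-isomorphic graphs in $\mathbb{K}_{s}^{t}=\{K_{s}^{t}\mid 2\leq t\leq s,\ s+t=n\}$ are $D$-cospectral.
   Context: Two connected graphs are $D$-cospectral if their distance matrices have the same spectrum. $K_{s}^{t}$ denotes the graph on $s+t$ vertices obtained from the complete graph $K_s$ by attaching a pendant edge (a new vertex of degree 1) to each of $t$ distinct vertices of $K_s$. *)

theory Defs
  imports Main "Jordan_Normal_Form.Char_Poly"
begin

text \<open>A (finite simple) graph is represented by its vertex set {0..<n} together with a
  symmetric irreflexive adjacency relation.\<close>

text \<open>K_s^t: vertices 0..s-1 form the clique K_s; for each j < t the vertex s+j is a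
  pendant vertex attached to clique vertex j.\<close>
definition Kst_adj :: "nat \<Rightarrow> nat \<Rightarrow> nat \<Rightarrow> nat \<Rightarrow> bool" where
  "Kst_adj s t i j \<longleftrightarrow> i \<noteq> j \<and>
     ((i < s \<and> j < s) \<or> (i < t \<and> j = s + i) \<or> (j < t \<and> i = s + j))"

definition has_walk :: "(nat \<Rightarrow> nat \<Rightarrow> bool) \<Rightarrow> nat set \<Rightarrow> nat \<Rightarrow> nat \<Rightarrow> nat \<Rightarrow> bool" where
  "has_walk adj V k u v \<longleftrightarrow> (\<exists>xs. length xs = Suc k \<and> hd xs = u \<and> last xs = v \<and>
      set xs \<subseteq> V \<and> (\<forall>i<k. adj (xs ! i) (xs ! Suc i)))"

definition graph_dist :: "(nat \<Rightarrow> nat \<Rightarrow> bool) \<Rightarrow> nat set \<Rightarrow> nat \<Rightarrow> nat \<Rightarrow> nat" where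
  "graph_dist adj V u v = (LEAST k. has_walk adj V k u v)"

definition dist_matrix :: "(nat \<Rightarrow> nat \<Rightarrow> bool) \<Rightarrow> nat \<Rightarrow> real mat" where
  "dist_matrix adj n = mat n n (\<lambda>(i, j). real (graph_dist adj {0..<n} i j))"

text \<open>D-cospectral: the distance matrices have the same spectrum (with multiplicities),
  i.e. the same characteristic polynomial.\<close>
definition D_cospectral :: "(nat \<Rightarrow> nat \<Rightarrow> bool) \<Rightarrow> nat \<Rightarrow> (nat \<Rightarrow> nat \<Rightarrow> bool) \<Rightarrow> nat \<Rightarrow> bool" where
  "D_cospectral adj1 n1 adj2 n2 \<longleftrightarrow>
     n1 = n2 \<and> char_poly (dist_matrix adj1 n1) = char_poly (dist_matrix adj2 n2)"

definition graph_iso :: "(nat \<Rightarrow> nat \<Rightarrow> bool) \<Rightarrow> nat \<Rightarrow> (nat \<Rightarrow> nat \<Rightarrow> bool) \<Rightarrow> nat \<Rightarrow> bool" where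
  "graph_iso adj1 n1 adj2 n2 \<longleftrightarrow> (\<exists>f. bij_betw f {0..<n1} {0..<n2} \<and>
     (\<forall>i\<in>{0..<n1}. \<forall>j\<in>{0..<n1}. adj1 i j \<longleftrightarrow> adj2 (f i) (f j)))"

end

theory Submission
  imports Defs "Jordan_Normal_Form.Schur_Decomposition"
begin


lemma hw0: "has_walk adj V 0 u v \<longleftrightarrow> u = v \<and> u \<in> V"
proof
  assume "has_walk adj V 0 u v"
  then obtain xs where "length xs = 1" "hd xs = u" "last xs = v" "set xs \<subseteq> V"
    unfolding has_walk_def by auto
  then show "u = v \<and> u \<in> V" by (cases xs) auto
next
  assume "u = v \<and> u \<in> V"
  then show "has_walk adj V 0 u v" unfolding has_walk_def by (intro exI[of _ "[u]"]) auto
qed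

lemma hwSuc: "has_walk adj V (Suc k) u v \<longleftrightarrow> (\<exists>w. u \<in> V \<and> adj u w \<and> has_walk adj V k w v)"
proof
  assume "has_walk adj V (Suc k) u v"
  then obtain xs where xs: "length xs = Suc (Suc k)" "hd xs = u" "last xs = v" "set xs \<subseteq> V"
     "\<forall>i<Suc k. adj (xs ! i) (xs ! Suc i)"
    unfolding has_walk_def by auto
  then obtain ys where ys0: "xs = u # ys" "length ys = Suc k" by (cases xs) auto
  then have ys: "xs = u # ys" "ys \<noteq> []" by auto
  have "adj u (hd ys)" using xs(5)[rule_format, of 0] ys by (simp add: hd_conv_nth)
  moreover have "has_walk adj V k (hd ys) v"
    unfolding has_walk_def
    apply (rule exI[of _ ys])
    using xs ys by auto
  moreover have "u \<in> V" using xs ys by auto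
  ultimately show "\<exists>w. u \<in> V \<and> adj u w \<and> has_walk adj V k w v" by blast
next
  assume "\<exists>w. u \<in> V \<and> adj u w \<and> has_walk adj V k w v"
  then obtain w ys where h: "u \<in> V" "adj u w" "length ys = Suc k" "hd ys = w" "last ys = v"
    "set ys \<subseteq> V" "\<forall>i<k. adj (ys ! i) (ys ! Suc i)"
    unfolding has_walk_def by auto
  show "has_walk adj V (Suc k) u v"
    unfolding has_walk_def
  proof (intro exI[of _ "u # ys"] conjI allI impI)
    fix i assume "i < Suc k"
    then show "adj ((u # ys) ! i) ((u # ys) ! Suc i)"
      using h by (cases i) (auto simp: hd_conv_nth[symmetric] simp del: hd_conv_nth, metis hd_conv_nth list.size(3) nat.simps(3))
  qed (use h in auto)
qed

lemma gd_eq: assumes "has_walk adj V d u v" "\<And>k. k < d \<Longrightarrow> \<not> has_walk adj V k u v"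
  shows "graph_dist adj V u v = d"
  unfolding graph_dist_def
  by (rule Least_equality) (use assms not_less in auto)

definition delta :: "nat \<Rightarrow> nat \<Rightarrow> nat \<Rightarrow> nat \<Rightarrow> nat" where
  "delta s t i j = (if i = j then 0 else if i < s \<and> j < s then 1 else if i < s then (if j = s + i then 1 else 2)
     else if j < s then (if i = s + j then 1 else 2) else 3)"

lemma less3: "k < (3::nat) \<longleftrightarrow> k = 0 \<or> k = Suc 0 \<or> k = Suc (Suc 0)" by auto
lemma less2: "k < (2::nat) \<longleftrightarrow> k = 0 \<or> k = Suc 0" by auto

lemma dist_Kst: assumes "t \<le> s" "i < s + t" "j < s + t"
  shows "graph_dist (Kst_adj s t) {0..<s+t} i j = delta s t i j"
proof (rule gd_eq)
  show "has_walk (Kst_adj s t) {0..<s+t} (delta s t i j) i j"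
  proof (cases "i < s \<and> j \<ge> s \<and> j \<noteq> s + i")
    case True
    then show ?thesis using assms unfolding delta_def
      by (auto simp: hw0 hwSuc numeral_eq_Suc Kst_adj_def intro!: exI[of _ "j - s"])
  next
    case F1: False
    show ?thesis
    proof (cases "i \<ge> s \<and> j < s \<and> i \<noteq> s + j")
      case True
      then show ?thesis using assms unfolding delta_def
        by (auto simp: hw0 hwSuc numeral_eq_Suc Kst_adj_def intro!: exI[of _ "i - s"])
    next
      case F2: False
      show ?thesis
      proof (cases "i \<ge> s \<and> j \<ge> s \<and> i \<noteq> j")
        case True
        have a: "Kst_adj s t i (i-s)" "Kst_adj s t (i-s) (j-s)" "Kst_adj s t (j-s) j"
          using True assms by (auto simp: Kst_adj_def)
        have d: "delta s t i j = 3" using True unfolding delta_def by auto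
        have b: "i - s < s + t" "j - s < s + t" using assms by auto
        show ?thesis unfolding d numeral_3_eq_3 hwSuc hw0 using a b True assms by (simp; blast)
      next
        case False
        then show ?thesis using assms F1 F2 unfolding delta_def
          by (auto simp: hw0 hwSuc numeral_eq_Suc Kst_adj_def)
      qed
    qed
  qed
  show "\<And>k. k < delta s t i j \<Longrightarrow> \<not> has_walk (Kst_adj s t) {0..<s + t} k i j"
    using assms unfolding delta_def
    by (auto simp: hw0 hwSuc less3 less2 Kst_adj_def split: if_splits)
qed


lemma sum_split_nat: fixes s t :: nat and f :: "nat \<Rightarrow> 'a::comm_monoid_add" shows "(\<Sum>j<s+t. f j) = (\<Sum>j<s. f j) + (\<Sum>b<t. f (s+b))"
  by (induction t) (auto simp: add.assoc)

lemma sum_if_eq: fixes x y :: real assumes "finite A"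
  shows "(\<Sum>j\<in>A. if j = a then x else y) = (if a \<in> A then x + (real (card A) - 1) * y else real (card A) * y)"
proof (cases "a \<in> A")
  case True
  have "(\<Sum>j\<in>A. if j = a then x else y) = x + (\<Sum>j\<in>A-{a}. if j = a then x else y)"
    unfolding sum.remove[OF assms True] by simp
  also have "(\<Sum>j\<in>A-{a}. if j = a then x else y) = (\<Sum>j\<in>A-{a}. y)" by (rule sum.cong) auto
  also have "\<dots> = (real (card A) - 1) * y" proof -
    have "card A \<ge> 1" using True assms card_gt_0_iff[of A] by auto
    then show ?thesis using True assms by (simp add: of_nat_diff)
  qed
  finally show ?thesis using True by simp
next
  case False
  then have "(\<Sum>j\<in>A. if j = a then x else y) = (\<Sum>j\<in>A. y)" by (intro sum.cong) auto
  then show ?thesis using False by simp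
qed

lemma sum_if_lt: fixes x y :: real
  shows "(\<Sum>j<n. if j = a then x else y) = (if a < n then x + (real n - 1) * y else real n * y)"
  using sum_if_eq[of "{..<n}" a x y] by simp

lemma W_Kst: assumes "t \<le> s"
  shows "(\<Sum>i<s+t. \<Sum>j<s+t. real (delta s t i j) * real (delta s t j i))
     = real s * (real s - 1) + 8 * real s * real t - 6 * real t + 9 * real t * (real t - 1)"
proof -
  define f where "f i j = real (delta s t i j) * real (delta s t j i)" for i j
  have B1: "(\<Sum>j<s. f i j) = real s - 1" if "i < s" for i
  proof -
    have "(\<Sum>j<s. f i j) = (\<Sum>j<s. if j = i then 0 else 1)"
      by (rule sum.cong) (use that in \<open>auto simp: f_def delta_def\<close>)
    then show ?thesis using that by (simp add: sum_if_lt)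
  qed
  have B2: "(\<Sum>b<t. f i (s+b)) = (if i < t then 4 * real t - 3 else 4 * real t)" if "i < s" for i
  proof -
    have "(\<Sum>b<t. f i (s+b)) = (\<Sum>b<t. if b = i then 1 else 4)"
      by (rule sum.cong) (use that in \<open>auto simp: f_def delta_def\<close>)
    then show ?thesis using that by (simp add: sum_if_lt algebra_simps)
  qed
  have B3: "(\<Sum>j<s. f (s+a) j) = 4 * real s - 3" if "a < t" for a
  proof -
    have "(\<Sum>j<s. f (s+a) j) = (\<Sum>j<s. if j = a then 1 else 4)"
      by (rule sum.cong) (use that in \<open>auto simp: f_def delta_def\<close>)
    then show ?thesis using that assms by (simp add: sum_if_lt algebra_simps)
  qed
  have B4: "(\<Sum>b<t. f (s+a) (s+b)) = 9 * (real t - 1)" if "a < t" for a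
  proof -
    have "(\<Sum>b<t. f (s+a) (s+b)) = (\<Sum>b<t. if b = a then 0 else 9)"
      by (rule sum.cong) (use that in \<open>auto simp: f_def delta_def\<close>)
    then show ?thesis using that assms by (simp add: sum_if_lt algebra_simps)
  qed
  have "(\<Sum>i<s+t. \<Sum>j<s+t. f i j) = (\<Sum>i<s. (\<Sum>j<s. f i j) + (\<Sum>b<t. f i (s+b)))
       + (\<Sum>a<t. (\<Sum>j<s. f (s+a) j) + (\<Sum>b<t. f (s+a) (s+b)))"
    by (simp add: sum_split_nat)
  also have "\<dots> = (\<Sum>i<s. (real s - 1) + (if i < t then 4 * real t - 3 else 4 * real t))
       + (\<Sum>a<t. (4 * real s - 3) + 9 * (real t - 1))"
    using B1 B2 B3 B4 by simp
  also have "(\<Sum>i<s. (real s - 1) + (if i < t then 4 * real t - 3 else 4 * real t))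
     = (\<Sum>i<t + (s - t). (real s - 1) + (if i < t then 4 * real t - 3 else 4 * real t))"
    using assms by simp
  also have "\<dots> = real t * (real s - 1 + 4 * real t - 3) + real (s - t) * (real s - 1 + 4 * real t)"
    unfolding sum_split_nat by simp
  finally show ?thesis using assms unfolding f_def by (simp add: of_nat_diff algebra_simps)
qed


definition mtr :: "'a::comm_ring_1 mat \<Rightarrow> 'a" where "mtr A = (\<Sum>i<dim_row A. A $$ (i,i))"

lemma mtr_sq: assumes "A \<in> carrier_mat n n"
  shows "mtr (A*A) = (\<Sum>i<n. \<Sum>k<n. A$$(i,k) * A$$(k,i))"
  using assms by (simp add: mtr_def scalar_prod_def atLeast0LessThan)

lemma mtr_comm: assumes "A \<in> carrier_mat n m" "B \<in> carrier_mat m n"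
  shows "mtr (A*B) = mtr (B*A)"
proof -
  have "mtr (A*B) = (\<Sum>i<n. \<Sum>k<m. A$$(i,k) * B$$(k,i))"
    using assms by (simp add: mtr_def scalar_prod_def atLeast0LessThan)
  also have "\<dots> = (\<Sum>k<m. \<Sum>i<n. B$$(k,i) * A$$(i,k))"
    by (subst sum.swap) (simp add: mult.commute)
  also have "\<dots> = mtr (B*A)"
    using assms by (simp add: mtr_def scalar_prod_def atLeast0LessThan)
  finally show ?thesis .
qed

lemma mtr_ut: assumes "B \<in> carrier_mat n n" "upper_triangular B"
  shows "mtr (B*B) = (\<Sum>i<n. B$$(i,i)^2)"
proof -
  have "mtr (B*B) = (\<Sum>i<n. \<Sum>k<n. B$$(i,k) * B$$(k,i))" by (rule mtr_sq[OF assms(1)])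
  also have "\<dots> = (\<Sum>i<n. \<Sum>k<n. if k = i then B$$(i,i)^2 else 0)"
  proof (intro sum.cong refl)
    fix i k assume "i \<in> {..<n}" "k \<in> {..<n}"
    then show "B$$(i,k) * B$$(k,i) = (if k = i then B$$(i,i)^2 else 0)"
      using assms unfolding upper_triangular_def
      by (cases "k < i") (auto simp: power2_eq_square)
  qed
  also have "\<dots> = (\<Sum>i<n. B$$(i,i)^2)" by simp
  finally show ?thesis .
qed

lemma mtr_sq_eigen: fixes A :: "complex mat"
  assumes A: "A \<in> carrier_mat n n" and c: "char_poly A = (\<Prod>e\<leftarrow>es. [:- e, 1:])"
  shows "mtr (A*A) = sum_list (map (\<lambda>e. e^2) es)"
proof -
  obtain B P Q where S: "schur_decomposition A es = (B,P,Q)" by (cases "schur_decomposition A es") auto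
  from schur_decomposition[OF A c S] have w: "similar_mat_wit A B P Q" and ut: "upper_triangular B"
    and dg: "diag_mat B = es" by auto
  from w A have B: "B \<in> carrier_mat n n" and P: "P \<in> carrier_mat n n" and Q: "Q \<in> carrier_mat n n"
    and QP: "Q * P = 1\<^sub>m n" and AE: "A = P * B * Q"
    unfolding similar_mat_wit_def Let_def by auto
  have "A * A = P * ((B * B) * Q)"
  proof -
    have "A * A = P * B * Q * (P * B * Q)" using AE by simp
    also have "\<dots> = P * (B * (Q * P) * B) * Q"
      using B P Q by (simp add: assoc_mult_mat[of _ n n _ n _ n])
    also have "\<dots> = P * ((B * B) * Q)" using B P Q QP by (simp add: assoc_mult_mat[of _ n n _ n _ n])
    finally show ?thesis .
  qed
  then have "mtr (A*A) = mtr (((B * B) * Q) * P)" using B P Q by (simp add: mtr_comm[of P n n])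
  also have "\<dots> = mtr (B * B)" using B P Q QP by (simp add: assoc_mult_mat[of _ n n _ n _ n])
  also have "\<dots> = (\<Sum>i<n. B$$(i,i)^2)" by (rule mtr_ut[OF B ut])
  also have "\<dots> = sum_list (map (\<lambda>e. e^2) es)"
    unfolding dg[symmetric] diag_mat_def using B by (simp add: sum_list_map_eq_sum_count2 lessThan_atLeast0 sum_set_upt_conv_sum_list_nat[symmetric] o_def)
  finally show ?thesis .
qed


lemma W_dist: assumes "t \<le> s"
  shows "(\<Sum>i<s+t. \<Sum>k<s+t. dist_matrix (Kst_adj s t) (s+t) $$ (i,k) * dist_matrix (Kst_adj s t) (s+t) $$ (k,i))
   = real s * (real s - 1) + 8 * real s * real t - 6 * real t + 9 * real t * (real t - 1)"
proof -
  have "(\<Sum>i<s+t. \<Sum>k<s+t. dist_matrix (Kst_adj s t) (s+t) $$ (i,k) * dist_matrix (Kst_adj s t) (s+t) $$ (k,i))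
      = (\<Sum>i<s+t. \<Sum>j<s+t. real (delta s t i j) * real (delta s t j i))"
    by (intro sum.cong refl) (simp add: dist_matrix_def dist_Kst[OF assms])
  then show ?thesis using W_Kst[OF assms] by simp
qed

lemma trace_inv: fixes D1 D2 :: "real mat"
  assumes D1: "D1 \<in> carrier_mat n n" and D2: "D2 \<in> carrier_mat n n"
    and c: "char_poly D1 = char_poly D2"
  shows "(\<Sum>i<n. \<Sum>k<n. D1$$(i,k) * D1$$(k,i)) = (\<Sum>i<n. \<Sum>k<n. D2$$(i,k) * D2$$(k,i))"
proof -
  define C1 where "C1 = map_mat complex_of_real D1"
  define C2 where "C2 = map_mat complex_of_real D2"
  have C1: "C1 \<in> carrier_mat n n" and C2: "C2 \<in> carrier_mat n n" using D1 D2 by (auto simp: C1_def C2_def)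
  have cc: "char_poly C1 = char_poly C2"
    unfolding C1_def C2_def of_real_hom.char_poly_hom[OF D1] of_real_hom.char_poly_hom[OF D2] c ..
  obtain es where es: "char_poly C1 = (\<Prod>e\<leftarrow>es. [:- e, 1:])" using char_poly_factorized[OF C1] by blast
  have "mtr (C1*C1) = mtr (C2*C2)"
    using mtr_sq_eigen[OF C1 es] mtr_sq_eigen[OF C2 es[unfolded cc]] by simp
  then have "complex_of_real (\<Sum>i<n. \<Sum>k<n. D1$$(i,k) * D1$$(k,i)) = complex_of_real (\<Sum>i<n. \<Sum>k<n. D2$$(i,k) * D2$$(k,i))"
    unfolding mtr_sq[OF C1] mtr_sq[OF C2] using D1 D2 by (simp add: C1_def C2_def flip: of_real_mult of_real_sum)
  then show ?thesis by (simp only: of_real_eq_iff)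
qed

theorem theorem3p3:
  fixes n s1 t1 s2 t2 :: nat
  assumes "2 \<le> t1" "t1 \<le> s1" "2 \<le> t2" "t2 \<le> s2"
    and "s1 + t1 = n" "s2 + t2 = n"
    and "D_cospectral (Kst_adj s1 t1) (s1 + t1) (Kst_adj s2 t2) (s2 + t2)"
  shows "graph_iso (Kst_adj s1 t1) (s1 + t1) (Kst_adj s2 t2) (s2 + t2)"
proof -
  have c: "char_poly (dist_matrix (Kst_adj s1 t1) n) = char_poly (dist_matrix (Kst_adj s2 t2) n)"
    using assms(7) unfolding D_cospectral_def assms(5,6) by simp
  have eq: "real s1 * (real s1 - 1) + 8 * real s1 * real t1 - 6 * real t1 + 9 * real t1 * (real t1 - 1)
      = real s2 * (real s2 - 1) + 8 * real s2 * real t2 - 6 * real t2 + 9 * real t2 * (real t2 - 1)"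
  proof -
    have m1: "dist_matrix (Kst_adj s1 t1) n \<in> carrier_mat n n"
      and m2: "dist_matrix (Kst_adj s2 t2) n \<in> carrier_mat n n" by (auto simp: dist_matrix_def)
    show ?thesis using trace_inv[OF m1 m2 c] W_dist[OF assms(2), unfolded assms(5)] W_dist[OF assms(4), unfolded assms(6)]
      by simp
  qed
  have s1: "real s1 = real n - real t1" and s2: "real s2 = real n - real t2" using assms(5,6) by auto
  have key: "(real t1 - real t2) * (6 * real n + 2 * (real t1 + real t2) - 14) = 0"
    using eq unfolding s1 s2 by (simp add: algebra_simps power2_eq_square)
  have "6 * real n + 2 * (real t1 + real t2) - 14 > 0" using assms by simp
  with key have "t1 = t2" by simp
  then have "s1 = s2" using assms by simp
  with \<open>t1 = t2\<close> show ?thesis unfolding graph_iso_def by (intro exI[of _ id]) auto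
qed

end
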